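(* Let $C$ be a countable torsion abelian group and $A$ a countable abelian group with torsion subgroup $tA$. Then $\mathrm{PExt}(C,tA)$ and $\mathrm{PExt}(C,A)$ are Borel-definably isomorphic.
   Context: For countable $C,A$: $\mathsf Z(C,A)$ is the Polish group (closed in $A^{C\times C}$) of normalized symmetric 2-cocycles ($c(x,0)=0$, $c(x,y)=c(y,x)$, $c(y,z)-c(x+y,z)+c(x,y+z)-c(x,y)=0$), $\mathsf B(C,A)$ the subgroup of coboundaries $c(x,y)=\phi(y)-\phi(x+y)+\phi(x)$, $\mathsf B_{\mathrm w}(C,A)$ the subgroup of cocycles whose restriction to $S\times S$ is a coboundary for every finite $S\le C$; $\mathrm{PExt}(C,A)=\mathsf B_{\mathrm w}(C,A)/\mathsf B(C,A)$, a group with a Polish cover (Polish group modulo Polishable subgroup). A homomorphism between groups with a Polish cover $\hat G/N\to\hat H/M$ is Borel-definable if it is induced by a Borel function $\hat G\to\hat H$; a Borel-definable isomorphism is a bijective Borel-definable homomorphism. *)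

theory Defs
  imports "HOL-Analysis.Analysis"
begin

definition nsmul :: "nat \<Rightarrow> 'a::ab_group_add \<Rightarrow> 'a" where
  "nsmul n a = (\<Sum>i<n. a)"

definition torsion_group :: "'a::ab_group_add itself \<Rightarrow> bool" where
  "torsion_group _ \<longleftrightarrow> (\<forall>x::'a. \<exists>n>0. nsmul n x = 0)"

definition tors :: "'a::ab_group_add set" where
  "tors = {a. \<exists>n>0. nsmul n a = 0}"

definition fin_subgroup :: "'c::ab_group_add set \<Rightarrow> bool" where
  "fin_subgroup F \<longleftrightarrow> finite F \<and> 0 \<in> F \<and> (\<forall>x\<in>F. \<forall>y\<in>F. x + y \<in> F) \<and> (\<forall>x\<in>F. - x \<in> F)"

text \<open>Normalized symmetric 2-cocycles C x C -> S, for S a subgroup of the ambient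
  abelian group (S = UNIV gives Z(C,A), S = tors gives Z(C,tA)).\<close>
definition Zc :: "'a set \<Rightarrow> ('c::ab_group_add \<times> 'c \<Rightarrow> 'a::ab_group_add) set" where
  "Zc S = {c. (\<forall>x y. c (x, y) \<in> S) \<and> (\<forall>x. c (x, 0) = 0) \<and> (\<forall>x y. c (x, y) = c (y, x))
              \<and> (\<forall>x y z. c (y, z) - c (x + y, z) + c (x, y + z) - c (x, y) = 0)}"

definition Bc :: "'a set \<Rightarrow> ('c::ab_group_add \<times> 'c \<Rightarrow> 'a::ab_group_add) set" where
  "Bc S = {c \<in> Zc S. \<exists>\<phi>. (\<forall>x. \<phi> x \<in> S) \<and> (\<forall>x y. c (x, y) = \<phi> y - \<phi> (x + y) + \<phi> x)}"

definition Bw :: "'a set \<Rightarrow> ('c::ab_group_add \<times> 'c \<Rightarrow> 'a::ab_group_add) set" where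
  "Bw S = {c \<in> Zc S. \<forall>F. fin_subgroup F \<longrightarrow>
              (\<exists>\<phi>. (\<forall>x. \<phi> x \<in> S) \<and> (\<forall>x\<in>F. \<forall>y\<in>F. c (x, y) = \<phi> y - \<phi> (x + y) + \<phi> x))}"

text \<open>The Polish space A^(C x C) (A countable discrete, product topology); its Borel
  sigma-algebra is the product sigma-algebra, since C x C is countable.\<close>
definition cocM :: "('c \<times> 'c \<Rightarrow> 'a) measure" where
  "cocM = PiM UNIV (\<lambda>_. count_space UNIV)"

text \<open>f : G -> H (G, H subsets of the Polish space of cocycles, carrying the subspace Borel
  structure) is Borel and induces a bijective group homomorphism G/N -> H/K.\<close>
definition borel_definable_iso ::
  "('c \<times> 'c \<Rightarrow> 'a::ab_group_add) set \<Rightarrow> ('c \<times> 'c \<Rightarrow> 'a) set \<Rightarrow>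
   ('c \<times> 'c \<Rightarrow> 'a) set \<Rightarrow> ('c \<times> 'c \<Rightarrow> 'a) set \<Rightarrow>
   (('c \<times> 'c \<Rightarrow> 'a) \<Rightarrow> ('c \<times> 'c \<Rightarrow> 'a)) \<Rightarrow> bool" where
  "borel_definable_iso G N H K f \<longleftrightarrow>
     f \<in> measurable (restrict_space cocM G) cocM \<and>
     f ` G \<subseteq> H \<and>
     (\<forall>x\<in>G. \<forall>y\<in>G. (\<lambda>i. x i - y i) \<in> N \<longrightarrow> (\<lambda>i. f x i - f y i) \<in> K) \<and>
     (\<forall>x\<in>G. \<forall>y\<in>G. (\<lambda>i. f (\<lambda>j. x j + y j) i - (f x i + f y i)) \<in> K) \<and>
     (\<forall>x\<in>G. f x \<in> K \<longrightarrow> x \<in> N) \<and>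
     (\<forall>z\<in>H. \<exists>x\<in>G. (\<lambda>i. f x i - z i) \<in> K)"

end

theory Submission
  imports Defs
begin

lemma nsmul_0[simp]: "nsmul 0 a = 0" by (simp add: nsmul_def)
lemma nsmul_Suc: "nsmul (Suc n) a = a + nsmul n a" by (simp add: nsmul_def add.commute)
lemma nsmul_zero[simp]: "nsmul n (0::'a::ab_group_add) = 0" by (simp add: nsmul_def)
lemma nsmul_add_n: "nsmul (m + n) a = nsmul m a + nsmul n a"
  by (induction m) (auto simp: nsmul_Suc algebra_simps)
lemma nsmul_mult: "nsmul (m * n) a = nsmul m (nsmul n a)"
  by (induction m) (auto simp: nsmul_Suc nsmul_add_n algebra_simps)
lemma nsmul_plus: "nsmul n (a + b) = nsmul n a + nsmul n b"
  by (induction n) (auto simp: nsmul_Suc algebra_simps)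
lemma nsmul_minus: "nsmul n (- a) = - nsmul n a"
  by (induction n) (auto simp: nsmul_Suc algebra_simps)
lemma nsmul_diff: "nsmul n (a - b) = nsmul n a - nsmul n b"
  using nsmul_plus[of n a "-b"] nsmul_minus[of n b] by simp
lemma nsmul_1[simp]: "nsmul 1 a = a" by (simp add: nsmul_def)
lemma nsmul_Suc0[simp]: "nsmul (Suc 0) a = a" by (simp add: nsmul_def)
lemma nsmul_mod: assumes "nsmul m a = 0" shows "nsmul (k mod m) a = nsmul k a"
proof -
  have "nsmul k a = nsmul ((k div m) * m + k mod m) a" by simp
  also have "\<dots> = nsmul ((k div m) * m) a + nsmul (k mod m) a" by (rule nsmul_add_n)
  also have "nsmul ((k div m) * m) a = 0" by (simp add: nsmul_mult assms)
  finally show ?thesis by simp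
qed

lemma tors_0: "0 \<in> tors" by (auto simp: tors_def intro: exI[of _ 1])
lemma tors_add: assumes "x \<in> tors" "y \<in> tors" shows "x + y \<in> tors"
proof -
  obtain n where n: "n > 0" "nsmul n x = 0" using assms(1) by (auto simp: tors_def)
  obtain m where m: "m > 0" "nsmul m y = 0" using assms(2) by (auto simp: tors_def)
  have "nsmul (m*n) x = 0" by (simp add: nsmul_mult n)
  moreover have "nsmul (m*n) y = 0" by (metis mult.commute nsmul_mult m(2) nsmul_zero)
  ultimately show ?thesis using n m by (auto simp: tors_def nsmul_plus intro!: exI[of _ "m*n"])
qed
lemma tors_neg: assumes "x \<in> tors" shows "- x \<in> tors"
  using assms by (auto simp: tors_def nsmul_minus)
lemma tors_diff: assumes "x \<in> tors" "y \<in> tors" shows "x - y \<in> tors"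
  using tors_add[OF assms(1) tors_neg[OF assms(2)]] by simp
lemma tors_nsmul: assumes "m > 0" "nsmul m x \<in> tors" shows "x \<in> tors"
proof -
  obtain n where n: "n > 0" "nsmul n (nsmul m x) = 0" using assms(2) by (auto simp: tors_def)
  then show ?thesis using assms(1) by (auto simp: tors_def nsmul_mult[symmetric] intro!: exI[of _ "n*m"])
qed
lemma tors_sum: assumes "\<forall>k<(m::nat). f k \<in> tors" shows "(\<Sum>k<m. f k) \<in> tors"
  using assms by (induction m) (auto simp: tors_0 tors_add)

definition gen2 :: "'c::ab_group_add \<Rightarrow> 'c \<Rightarrow> nat \<Rightarrow> nat \<Rightarrow> 'c set" where
  "gen2 a b ma mb = (\<lambda>(i,j). nsmul i a + nsmul j b) ` ({..<ma} \<times> {..<mb})"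

lemma gen2_mem:
  assumes "ma > 0" "mb > 0" "nsmul ma a = 0" "nsmul mb b = 0"
  shows "nsmul i a + nsmul j b \<in> gen2 a b ma mb"
proof -
  have "nsmul i a + nsmul j b = (\<lambda>(i,j). nsmul i a + nsmul j b) (i mod ma, j mod mb)"
    by (simp add: nsmul_mod assms)
  moreover have "(i mod ma, j mod mb) \<in> {..<ma} \<times> {..<mb}" using assms by auto
  ultimately show ?thesis unfolding gen2_def by blast
qed

lemma gen2_sub:
  assumes "ma > 0" "mb > 0" "nsmul ma a = 0" "nsmul mb b = 0"
  shows "fin_subgroup (gen2 a b ma mb)" and "a \<in> gen2 a b ma mb" and "b \<in> gen2 a b ma mb"
    and "nsmul k a \<in> gen2 a b ma mb"
proof -
  note M = gen2_mem[OF assms]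
  show "a \<in> gen2 a b ma mb" using M[of 1 0] by simp
  show "b \<in> gen2 a b ma mb" using M[of 0 1] by simp
  show "nsmul k a \<in> gen2 a b ma mb" using M[of k 0] by simp
  have fin: "finite (gen2 a b ma mb)" by (simp add: gen2_def)
  have z: "0 \<in> gen2 a b ma mb" using M[of 0 0] by simp
  have add: "\<forall>x\<in>gen2 a b ma mb. \<forall>y\<in>gen2 a b ma mb. x + y \<in> gen2 a b ma mb"
  proof (intro ballI)
    fix x y assume "x \<in> gen2 a b ma mb" "y \<in> gen2 a b ma mb"
    then obtain i j i' j' where "x = nsmul i a + nsmul j b" "y = nsmul i' a + nsmul j' b"
      by (auto simp: gen2_def)
    then have "x + y = nsmul (i+i') a + nsmul (j+j') b" by (simp add: nsmul_add_n algebra_simps)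
    then show "x + y \<in> gen2 a b ma mb" using M by simp
  qed
  have neg: "\<forall>x\<in>gen2 a b ma mb. - x \<in> gen2 a b ma mb"
  proof
    fix x assume "x \<in> gen2 a b ma mb"
    then obtain i j where x: "x = nsmul i a + nsmul j b" by (auto simp: gen2_def)
    have "nsmul ((ma - 1) * i) a + nsmul i a = nsmul (ma * i) a"
      using assms(1) by (simp add: nsmul_add_n[symmetric] algebra_simps)
    also have "\<dots> = 0" by (metis mult.commute nsmul_mult assms(3) nsmul_zero)
    finally have 1: "nsmul ((ma - 1) * i) a = - nsmul i a" by (simp add: eq_neg_iff_add_eq_0)
    have "nsmul ((mb - 1) * j) b + nsmul j b = nsmul (mb * j) b"
      using assms(2) by (simp add: nsmul_add_n[symmetric] algebra_simps)
    also have "\<dots> = 0" by (metis mult.commute nsmul_mult assms(4) nsmul_zero)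
    finally have 2: "nsmul ((mb - 1) * j) b = - nsmul j b" by (simp add: eq_neg_iff_add_eq_0)
    have "- x = nsmul ((ma - 1) * i) a + nsmul ((mb - 1) * j) b" using 1 2 x by simp
    then show "- x \<in> gen2 a b ma mb" using M by simp
  qed
  show "fin_subgroup (gen2 a b ma mb)" using fin z add neg by (simp add: fin_subgroup_def)
qed

lemma telescope:
  assumes "\<And>k. nsmul k c \<in> F"
    and "\<forall>a\<in>F. \<forall>b\<in>F. z (a, b) = \<psi> b - \<psi> (a + b) + \<psi> a"
  shows "(\<Sum>k<m. z (c, nsmul k c)) = \<psi> 0 - \<psi> (nsmul m c) + nsmul m (\<psi> c)"
proof (induction m)
  case 0 then show ?case by simp
next
  case (Suc m)
  have c: "c \<in> F" using assms(1)[of 1] by simp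
  have "z (c, nsmul m c) = \<psi> (nsmul m c) - \<psi> (c + nsmul m c) + \<psi> c"
    using assms(2) c assms(1) by blast
  then show ?case
    by (simp only: sum.lessThan_Suc Suc.IH nsmul_Suc) (simp add: algebra_simps)
qed

lemma nsmul_closed:
  assumes "0 \<in> F" "\<forall>x\<in>F. \<forall>y\<in>F. x + y \<in> F" "c \<in> F" shows "nsmul k c \<in> F"
  using assms by (induction k) (auto simp: nsmul_Suc)

definition phi :: "('c::ab_group_add \<times> 'c \<Rightarrow> 'a::ab_group_add) \<Rightarrow> 'c \<Rightarrow> 'a" where
  "phi z c = (if c = 0 then 0 else SOME p. \<exists>m>0. nsmul m c = 0 \<and> nsmul m p = (\<Sum>k<m. z (c, nsmul k c)))"

lemma phi_prop:
  assumes T: "torsion_group TYPE('c::ab_group_add)" and z: "z \<in> Bw UNIV" and c: "(c::'c) \<noteq> 0"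
  shows "\<exists>m>0. nsmul m c = 0 \<and> nsmul m (phi z c) = (\<Sum>k<m. z (c, nsmul k c))"
proof -
  obtain m where m: "m > 0" "nsmul m c = 0" using T by (auto simp: torsion_group_def)
  have G: "fin_subgroup (gen2 c 0 m 1)" "c \<in> gen2 c 0 m 1" "\<And>k. nsmul k c \<in> gen2 c 0 m 1"
    using gen2_sub[of m 1 c 0] m by auto
  obtain \<psi> where \<psi>: "\<forall>x\<in>gen2 c 0 m 1. \<forall>y\<in>gen2 c 0 m 1. z (x, y) = \<psi> y - \<psi> (x + y) + \<psi> x"
    using z G(1) unfolding Bw_def by blast
  have "(\<Sum>k<m. z (c, nsmul k c)) = \<psi> 0 - \<psi> (nsmul m c) + nsmul m (\<psi> c)"
    by (rule telescope[OF G(3) \<psi>])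
  then have "\<exists>p. \<exists>m>0. nsmul m c = 0 \<and> nsmul m p = (\<Sum>k<m. z (c, nsmul k c))"
    using m by (intro exI[of _ "\<psi> c"] exI[of _ m]) simp
  from someI_ex[OF this] show ?thesis using c by (simp add: phi_def)
qed

lemma keyK:
  assumes T: "torsion_group TYPE('c::ab_group_add)" and z: "z \<in> Bw UNIV"
    and F: "0 \<in> F" "\<forall>x\<in>F. \<forall>y\<in>F. x + y \<in> F"
    and \<psi>: "\<forall>a\<in>F. \<forall>b\<in>F. z (a, b) = \<psi> b - \<psi> (a + b) + \<psi> a"
    and c: "(c::'c) \<in> F"
  shows "\<psi> c - phi z c \<in> tors"
proof (cases "c = 0")
  case True
  have "z (0, 0) = 0" using z by (auto simp: Bw_def Zc_def)
  moreover have "z (0, 0) = \<psi> 0" using \<psi> F(1) by force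
  ultimately show ?thesis using True by (simp add: phi_def tors_0)
next
  case False
  obtain m where m: "m > 0" "nsmul m c = 0" "nsmul m (phi z c) = (\<Sum>k<m. z (c, nsmul k c))"
    using phi_prop[OF T z False] by blast
  have "(\<Sum>k<m. z (c, nsmul k c)) = \<psi> 0 - \<psi> (nsmul m c) + nsmul m (\<psi> c)"
    by (rule telescope[OF nsmul_closed[OF F c] \<psi>])
  then have "nsmul m (\<psi> c - phi z c) = 0" using m by (simp add: nsmul_diff)
  then show ?thesis using m(1) by (auto simp: tors_def)
qed

definition xx :: "('c::ab_group_add \<times> 'c \<Rightarrow> 'a::ab_group_add) \<Rightarrow> ('c \<times> 'c \<Rightarrow> 'a)" where
  "xx z = (\<lambda>p. z p - phi z (fst p) - phi z (snd p) + phi z (fst p + snd p))"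

lemma xx_tors:
  assumes T: "torsion_group TYPE('c::ab_group_add)" and z: "z \<in> Bw UNIV"
  shows "xx z (a::'c, b) \<in> tors"
proof -
  obtain ma where ma: "ma > 0" "nsmul ma a = 0" using T by (auto simp: torsion_group_def)
  obtain mb where mb: "mb > 0" "nsmul mb b = 0" using T by (auto simp: torsion_group_def)
  note G = gen2_sub[OF ma(1) mb(1) ma(2) mb(2)]
  obtain \<psi> where \<psi>: "\<forall>x\<in>gen2 a b ma mb. \<forall>y\<in>gen2 a b ma mb. z (x, y) = \<psi> y - \<psi> (x + y) + \<psi> x"
    using z G(1) unfolding Bw_def by blast
  have F: "0 \<in> gen2 a b ma mb" "\<forall>x\<in>gen2 a b ma mb. \<forall>y\<in>gen2 a b ma mb. x + y \<in> gen2 a b ma mb"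
    using G(1) by (auto simp: fin_subgroup_def)
  have ab: "a + b \<in> gen2 a b ma mb" using F G by blast
  note K = keyK[OF T z F \<psi>]
  have "xx z (a, b) = (\<psi> a - phi z a) + (\<psi> b - phi z b) - (\<psi> (a+b) - phi z (a+b))"
    using \<psi> G(2,3) by (simp add: xx_def algebra_simps)
  then show ?thesis using K[OF G(2)] K[OF G(3)] K[OF ab] by (simp add: tors_add tors_diff)
qed

lemma phi0[simp]: "phi z 0 = 0" by (simp add: phi_def)

lemma xx_Bw:
  fixes z :: "'c::ab_group_add \<times> 'c \<Rightarrow> 'a::ab_group_add"
  assumes T: "torsion_group TYPE('c)" and z: "z \<in> Bw UNIV"
  shows "xx z \<in> Bw tors" and "(\<lambda>i. xx z i - z i) \<in> Bc UNIV"
proof -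
  have zZ: "z \<in> Zc UNIV" using z by (simp add: Bw_def)
  have Z: "xx z \<in> Zc tors"
    unfolding Zc_def
  proof (intro CollectI conjI allI)
    fix x y :: 'c show "xx z (x, y) \<in> tors" by (rule xx_tors[OF T z])
  next
    fix x :: 'c
    have "z (x, 0) = 0" using zZ unfolding Zc_def by blast
    then show "xx z (x, 0) = 0" by (simp add: xx_def)
  next
    fix x y :: 'c show "xx z (x, y) = xx z (y, x)" using zZ by (simp add: xx_def Zc_def add.commute)
  next
    fix x y w :: 'c
    have "z (y, w) - z (x + y, w) + z (x, y + w) - z (x, y) = 0" using zZ unfolding Zc_def by blast
    then show "xx z (y, w) - xx z (x + y, w) + xx z (x, y + w) - xx z (x, y) = 0"
      by (simp add: xx_def algebra_simps)
  qed
  show "xx z \<in> Bw tors"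
    unfolding Bw_def
  proof (intro CollectI conjI Z allI impI)
    fix F :: "'c set" assume Fs: "fin_subgroup F"
    obtain \<psi> where \<psi>: "\<forall>x\<in>F. \<forall>y\<in>F. z (x, y) = \<psi> y - \<psi> (x + y) + \<psi> x"
      using z Fs unfolding Bw_def by blast
    have F: "0 \<in> F" "\<forall>x\<in>F. \<forall>y\<in>F. x + y \<in> F" using Fs by (auto simp: fin_subgroup_def)
    define chi where "chi c = (if c \<in> F then \<psi> c - phi z c else 0)" for c
    show "\<exists>\<phi>. (\<forall>x. \<phi> x \<in> tors) \<and> (\<forall>x\<in>F. \<forall>y\<in>F. xx z (x, y) = \<phi> y - \<phi> (x + y) + \<phi> x)"
    proof (intro exI conjI allI ballI)
      fix x show "chi x \<in> tors" using keyK[OF T z F \<psi>] by (simp add: chi_def tors_0)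
    next
      fix x y assume "x \<in> F" "y \<in> F"
      then show "xx z (x, y) = chi y - chi (x + y) + chi x"
        using \<psi> F by (simp add: chi_def xx_def algebra_simps)
    qed
  qed
  show "(\<lambda>i. xx z i - z i) \<in> Bc UNIV"
    unfolding Bc_def Zc_def
  proof (intro CollectI conjI allI exI[of _ "\<lambda>c. - phi z c"])
    fix x y w :: 'c
    show "xx z (y, w) - z (y, w) - (xx z (x + y, w) - z (x + y, w)) + (xx z (x, y + w) - z (x, y + w)) - (xx z (x, y) - z (x, y)) = 0"
      by (simp add: xx_def algebra_simps)
  qed (auto simp: xx_def algebra_simps)
qed

lemma inj_part:
  assumes T: "torsion_group TYPE('c::ab_group_add)" and x: "x \<in> Bw tors" and xb: "x \<in> Bc UNIV"
  shows "(x :: 'c \<times> 'c \<Rightarrow> 'a::ab_group_add) \<in> Bc tors"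
proof -
  have xZ: "x \<in> Zc tors" using x by (simp add: Bw_def)
  obtain \<phi> where \<phi>: "\<forall>a b. x (a, b) = \<phi> b - \<phi> (a + b) + \<phi> a" using xb by (auto simp: Bc_def)
  have "\<phi> c \<in> tors" for c
  proof -
    obtain m where m: "m > 0" "nsmul m c = 0" using T by (auto simp: torsion_group_def)
    have "(\<Sum>k<m. x (c, nsmul k c)) = \<phi> 0 - \<phi> (nsmul m c) + nsmul m (\<phi> c)"
      by (rule telescope[where F = UNIV]) (use \<phi> in auto)
    moreover have "(\<Sum>k<m. x (c, nsmul k c)) \<in> tors"
      by (rule tors_sum) (use xZ in \<open>auto simp: Zc_def\<close>)
    ultimately have "nsmul m (\<phi> c) \<in> tors" using m by simp
    then show ?thesis using m(1) tors_nsmul by blast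
  qed
  then show ?thesis using xZ \<phi> by (auto simp: Bc_def)
qed

theorem lemma4p4:
  assumes "torsion_group TYPE('c::{ab_group_add, countable})"
  shows "\<exists>f. borel_definable_iso
            (Bw tors :: ('c \<times> 'c \<Rightarrow> 'a::{ab_group_add, countable}) set) (Bc tors)
            (Bw UNIV) (Bc UNIV) f"
proof (intro exI[of _ "\<lambda>x::'c \<times> 'c \<Rightarrow> 'a. x"])
  have sub: "Zc tors \<subseteq> (Zc UNIV :: ('c \<times> 'c \<Rightarrow> 'a) set)" by (auto simp: Zc_def)
  have BcBc: "Bc tors \<subseteq> (Bc UNIV :: ('c \<times> 'c \<Rightarrow> 'a) set)" using sub by (auto simp: Bc_def)
  have BwBw: "Bw tors \<subseteq> (Bw UNIV :: ('c \<times> 'c \<Rightarrow> 'a) set)" using sub by (auto simp: Bw_def) blast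
  have zero: "(\<lambda>i. 0) \<in> (Bc UNIV :: ('c \<times> 'c \<Rightarrow> 'a) set)"
    by (auto simp: Bc_def Zc_def intro!: exI[of _ "\<lambda>_. 0"])
  have meas: "(\<lambda>x. x) \<in> measurable (restrict_space cocM (Bw tors)) (cocM :: ('c \<times> 'c \<Rightarrow> 'a) measure)"
    by (rule measurable_restrict_space1) simp
  show "borel_definable_iso (Bw tors :: ('c \<times> 'c \<Rightarrow> 'a) set) (Bc tors) (Bw UNIV) (Bc UNIV) (\<lambda>x. x)"
    unfolding borel_definable_iso_def
  proof (intro conjI ballI impI meas)
    show "(\<lambda>x. x) ` (Bw tors :: ('c \<times> 'c \<Rightarrow> 'a) set) \<subseteq> Bw UNIV"
      using BwBw by auto
  next
    fix x y :: "'c \<times> 'c \<Rightarrow> 'a" assume "(\<lambda>i. x i - y i) \<in> Bc tors"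
    then show "(\<lambda>i. x i - y i) \<in> Bc UNIV" using BcBc by blast
  next
    fix x y :: "'c \<times> 'c \<Rightarrow> 'a"
    show "(\<lambda>i. (\<lambda>j. x j + y j) i - (x i + y i)) \<in> Bc UNIV" using zero by simp
  next
    fix x :: "'c \<times> 'c \<Rightarrow> 'a" assume "x \<in> Bw tors" "x \<in> Bc UNIV"
    then show "x \<in> Bc tors" using inj_part[OF assms] by blast
  next
    fix z :: "'c \<times> 'c \<Rightarrow> 'a" assume "z \<in> Bw UNIV"
    then show "\<exists>x\<in>Bw tors. (\<lambda>i. x i - z i) \<in> Bc UNIV" using xx_Bw[OF assms] by blast
  qed
qed

end
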